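(* Let $d,n\ge 1$ and let $\mathbf{X},\mathbf{X}'\in\mathbb{R}^{d\times n}$ be neighboring datasets all of whose columns lie in $\mathcal{B}_d$. Let $\mathbf{\Lambda}=\mathrm{diag}(\lambda_1,\dots,\lambda_d)$ and $\mathbf{\Lambda}'=\mathrm{diag}(\lambda_1',\dots,\lambda_d')$ be the diagonal matrices of eigenvalues (in non-increasing order) of $\mathbf{\Sigma}(\mathbf{X})$ and $\mathbf{\Sigma}(\mathbf{X}')$ respectively. Then $$\|\mathbf{\Lambda}-\mathbf{\Lambda}'\|_F\le \frac{\sqrt{2}}{n}.$$
   Context: $\mathcal{B}_d$ denotes the closed unit $\ell_2$-ball in $\mathbb{R}^d$ centered at the origin. A dataset is a matrix $\mathbf{X}\in\mathbb{R}^{d\times n}$ whose columns $X_1,\dots,X_n$ are the individuals' vectors. Two datasets $\mathbf{X},\mathbf{X}'\in\mathbb{R}^{d\times n}$ are neighbors if they differ in exactly one column. The empirical covariance is $\mathbf{\Sigma}(\mathbf{X})=\frac1n\sum_i X_iX_i^T=\frac1n\mathbf{X}\mathbf{X}^T$. *)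

theory Defs
  imports "Jordan_Normal_Form.Matrix" "Jordan_Normal_Form.Char_Poly"
begin

text \<open>Datasets are d x n real matrices (columns = individuals).\<close>

definition in_unit_ball_cols :: "real mat \<Rightarrow> bool" where
  "in_unit_ball_cols X \<longleftrightarrow> (\<forall>j < dim_col X. (\<Sum>i < dim_row X. (X $$ (i, j))\<^sup>2) \<le> 1)"

definition neighbors :: "real mat \<Rightarrow> real mat \<Rightarrow> bool" where
  "neighbors X X' \<longleftrightarrow> dim_row X = dim_row X' \<and> dim_col X = dim_col X' \<and>
     card {j. j < dim_col X \<and> col X j \<noteq> col X' j} = 1"

definition emp_cov :: "real mat \<Rightarrow> real mat" where
  "emp_cov X = (1 / real (dim_col X)) \<cdot>\<^sub>m (X * transpose_mat X)"

definition eigenvalues_desc :: "real mat \<Rightarrow> real list" where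
  "eigenvalues_desc A = rev (sorted_list_of_multiset (proots (char_poly A)))"

end

theory Submission imports Defs "Jordan_Normal_Form.Schur_Decomposition" "HOL-Computational_Algebra.Fundamental_Theorem_Algebra" begin

lemma real_sprodc[simp]: "(v::real vec) \<bullet>c w = v \<bullet> w"
  by (simp add: conjugate_vec_def)

lemma sym_real_eigenvalue:
  fixes A :: "real mat"
  assumes A: "A \<in> carrier_mat n n" and n: "n > 0" and sym: "transpose_mat A = A"
  shows "\<exists>e. eigenvalue A e"
proof -
  define Ac where "Ac = map_mat complex_of_real A"
  have Ac: "Ac \<in> carrier_mat n n" using A unfolding Ac_def by auto
  have cp: "char_poly Ac = map_poly of_real (char_poly A)"
    unfolding Ac_def by (rule of_real_hom.char_poly_hom[OF A])
  have deg: "degree (char_poly Ac) = n"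
    using degree_monic_char_poly[OF Ac] by auto
  hence "\<not> constant (poly (char_poly Ac))"
    using n by (simp add: constant_degree)
  then obtain l where "poly (char_poly Ac) l = 0"
    using fundamental_theorem_of_algebra by blast
  hence "eigenvalue Ac l" using eigenvalue_root_char_poly[OF Ac] by auto
  then obtain v where v: "v \<in> carrier_vec n" "v \<noteq> 0\<^sub>v n" "Ac *\<^sub>v v = l \<cdot>\<^sub>v v"
    unfolding eigenvalue_def eigenvector_def using Ac by auto
  define s where "s = (\<Sum>i<n. cnj (v $ i) * (Ac *\<^sub>v v) $ i)"
  define N where "N = (\<Sum>i<n. (cmod (v $ i))^2)"
  have s1: "s = l * of_real N"
  proof -
    have "s = (\<Sum>i<n. l * (cnj (v $ i) * v $ i))"
      unfolding s_def v(3) using v(1) by (intro sum.cong, auto)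
    also have "\<dots> = l * (\<Sum>i<n. of_real ((cmod (v $ i))^2))"
    proof -
      have "\<And>a. cnj a * a = complex_of_real ((cmod a)^2)"
        by (metis complex_norm_square mult.commute)
      thus ?thesis by (simp add: sum_distrib_left)
    qed
    finally show ?thesis unfolding N_def by simp
  qed
  have s2: "s = (\<Sum>i<n. \<Sum>j<n. cnj (v $ i) * of_real (A $$ (i,j)) * v $ j)"
    unfolding s_def using A v(1)
    by (auto simp: Ac_def mult_mat_vec_def scalar_prod_def sum_distrib_left mult.assoc atLeast0LessThan intro!: sum.cong)
  have "cnj s = (\<Sum>i<n. \<Sum>j<n. v $ i * of_real (A $$ (i,j)) * cnj (v $ j))"
    unfolding s2 by simp
  also have "\<dots> = (\<Sum>j<n. \<Sum>i<n. v $ i * of_real (A $$ (i,j)) * cnj (v $ j))"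
    by (rule sum.swap)
  also have "\<dots> = s" unfolding s2
  proof (intro sum.cong refl)
    fix i j assume "i \<in> {..<n}" "j \<in> {..<n}"
    hence "A $$ (j,i) = A $$ (i,j)" using arg_cong[OF sym, of "\<lambda>M. M $$ (i,j)"] A by auto
    thus "v $ j * of_real (A $$ (j, i)) * cnj (v $ i) = cnj (v $ i) * of_real (A $$ (i, j)) * v $ j"
      by simp
  qed
  finally have cs: "cnj s = s" .
  have "N > 0"
  proof -
    from v(2) v(1) obtain i where i: "i < n" "v $ i \<noteq> 0" by (auto simp: vec_eq_iff)
    have "(cmod (v $ i))^2 \<le> N" unfolding N_def
      by (rule member_le_sum[where f = "\<lambda>i. (cmod (v $ i))^2"], insert i, auto)
    moreover have "(cmod (v $ i))^2 > 0" using i by simp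
    ultimately show ?thesis by linarith
  qed
  have "cnj l = l"
  proof -
    have "cnj l * of_real N = l * of_real N" using cs unfolding s1 by simp
    thus ?thesis using \<open>N > 0\<close> by simp
  qed
  hence lr: "l = of_real (Re l)" by (simp add: complex_eq_iff)
  have "poly (map_poly of_real (char_poly A)) (of_real (Re l) :: complex) = 0"
    using \<open>poly (char_poly Ac) l = 0\<close> cp lr by metis
  hence "poly (char_poly A) (Re l) = 0" by simp
  thus ?thesis using eigenvalue_root_char_poly[OF A] by auto
qed

definition diagm :: "real list \<Rightarrow> real mat" where
  "diagm ms = mat (length ms) (length ms) (\<lambda>(i,j). if i = j then ms ! i else 0)"

lemma diagm_carrier[simp]: "diagm ms \<in> carrier_mat (length ms) (length ms)"
  by (simp add: diagm_def)

lemma eig_decomp: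
  fixes A U :: "real mat"
  assumes U: "U \<in> carrier_mat n n" and UU: "transpose_mat U * U = 1\<^sub>m n"
    and l: "length ms = n" and A: "A = U * diagm ms * transpose_mat U" and k: "k < n"
  shows "eigenvalue A (ms ! k)"
proof -
  let ?c = "col U k"
  let ?D = "diagm ms"
  have c: "?c \<in> carrier_vec n" using U by auto
  have D: "?D \<in> carrier_mat n n" using l diagm_carrier by metis
  have 1: "transpose_mat U *\<^sub>v ?c = unit_vec n k"
    using col_mult2[of "transpose_mat U" n n U n k] U k UU col_one[OF k] by auto
  have 2: "?D *\<^sub>v unit_vec n k = ms ! k \<cdot>\<^sub>v unit_vec n k"
    by (rule eq_vecI, insert D k l, auto simp: diagm_def scalar_prod_right_unit)
  have 3: "U *\<^sub>v unit_vec n k = ?c"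
    by (rule eq_vecI, insert U k, auto simp: scalar_prod_right_unit)
  have "A *\<^sub>v ?c = U *\<^sub>v (?D *\<^sub>v (transpose_mat U *\<^sub>v ?c))"
    unfolding A using U D c by (simp add: assoc_mult_mat_vec[of _ n n _ n])
  also have "\<dots> = ms ! k \<cdot>\<^sub>v ?c" unfolding 1 2 using U 3 by (simp add: mult_mat_vec)
  finally have Ac: "A *\<^sub>v ?c = ms ! k \<cdot>\<^sub>v ?c" .
  have c0: "?c \<noteq> 0\<^sub>v n"
  proof
    assume "?c = 0\<^sub>v n"
    hence "(transpose_mat U *\<^sub>v 0\<^sub>v n) $ k = 1" using 1 k by auto
    moreover have "(transpose_mat U *\<^sub>v 0\<^sub>v n) $ k = 0" using U k by simp
    ultimately show False by simp
  qed
  have "dim_row A = n" unfolding A using U by simp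
  thus ?thesis unfolding eigenvalue_def eigenvector_def using c c0 Ac by auto
qed


lemma spectral:
  fixes A :: "real mat"
  assumes "A \<in> carrier_mat n n" "transpose_mat A = A"
  shows "\<exists>U ms. U \<in> carrier_mat n n \<and> transpose_mat U * U = 1\<^sub>m n \<and> length ms = n
     \<and> sorted (rev ms) \<and> A = U * diagm ms * transpose_mat U"
  using assms
proof (induction n arbitrary: A)
  case 0
  show ?case
    by (rule exI[of _ "1\<^sub>m 0"], rule exI[of _ "[]"], insert 0(1), auto intro!: eq_matI)
next
  case (Suc m A)
  let ?n = "Suc m"
  have A: "A \<in> carrier_mat ?n ?n" and sym: "transpose_mat A = A" using Suc by auto
  define E where "E = {e. eigenvalue A e}"
  have Eeq: "E = {e. poly (char_poly A) e = 0}" unfolding E_def eigenvalue_root_char_poly[OF A] ..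
  have "char_poly A \<noteq> 0" using degree_monic_char_poly[OF A] by auto
  hence finE: "finite E" unfolding Eeq by (rule poly_roots_finite)
  have "E \<noteq> {}" using sym_real_eigenvalue[OF A _ sym] unfolding E_def by auto
  define e where "e = Max E"
  have eE: "eigenvalue A e" using Max_in[OF finE \<open>E \<noteq> {}\<close>] unfolding e_def E_def by auto
  have emax: "\<And>e'. eigenvalue A e' \<Longrightarrow> e' \<le> e" unfolding e_def using finE E_def by auto
  define v where "v = find_eigenvector A e"
  from find_eigenvector[OF A eE] have "eigenvector A v e" unfolding v_def .
  hence v: "v \<in> carrier_vec ?n" and v0: "v \<noteq> 0\<^sub>v ?n" and Av: "A *\<^sub>v v = e \<cdot>\<^sub>v v"
    unfolding eigenvector_def using A by auto
  interpret cof_vec_space ?n "TYPE(real)" .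
  define b where "b = basis_completion v"
  from basis_completion[OF v v0, folded b_def]
  have dist_b: "distinct b" and indep: "\<not> lin_dep (set b)" and bc: "set b \<subseteq> carrier_vec ?n"
    and hdb: "hd b = v" and len_b: "length b = ?n" by auto
  from hdb len_b obtain vs where bv: "b = v # vs" by (cases b, auto)
  define ws where "ws = gram_schmidt ?n b"
  from gram_schmidt_result[OF bc dist_b indep refl, folded ws_def]
  have wsc: "set ws \<subseteq> carrier_vec ?n" and orth: "corthogonal ws" and lws: "length ws = ?n"
    by (auto simp: len_b)
  have hdws: "hd ws = v" using gram_schmidt_hd[OF v, of vs] unfolding ws_def bv .
  define ws' where "ws' = map (\<lambda>w. (1 / sqrt (w \<bullet> w)) \<cdot>\<^sub>v w) ws"
  have lws': "length ws' = ?n" unfolding ws'_def using lws by simp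
  have ws'c: "\<And>i. i < ?n \<Longrightarrow> ws' ! i \<in> carrier_vec ?n"
    unfolding ws'_def using wsc lws by auto
  have on: "ws' ! i \<bullet> ws' ! j = (if i = j then 1 else 0)" if ij: "i < ?n" "j < ?n" for i j
  proof -
    have wi: "ws ! i \<in> carrier_vec ?n" "ws ! j \<in> carrier_vec ?n" using wsc lws ij by auto
    have pos: "ws ! i \<bullet> ws ! i > 0"
    proof -
      have "ws ! i \<bullet> ws ! i \<noteq> 0" using corthogonalD[OF orth, of i i] ij lws by simp
      moreover have "ws ! i \<bullet> ws ! i \<ge> 0" unfolding scalar_prod_def by (auto intro: sum_nonneg)
      ultimately show ?thesis by linarith
    qed
    have "ws' ! i \<bullet> ws' ! j = (1 / sqrt (ws ! i \<bullet> ws ! i)) * (1 / sqrt (ws ! j \<bullet> ws ! j)) * (ws ! i \<bullet> ws ! j)"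
      unfolding ws'_def using ij lws wi
      by (simp add: smult_scalar_prod_distrib[of _ ?n] scalar_prod_smult_distrib[of _ ?n])
    also have "\<dots> = (if i = j then 1 else 0)"
    proof (cases "i = j")
      case True
      thus ?thesis using pos by (simp add: field_simps)
    next
      case False
      hence "ws ! i \<bullet> ws ! j = 0" using corthogonalD[OF orth, of i j] ij lws by simp
      thus ?thesis using False by simp
    qed
    finally show ?thesis .
  qed
  define W where "W = mat_of_cols ?n ws'"
  have W: "W \<in> carrier_mat ?n ?n" unfolding W_def using mat_of_cols_carrier(1)[of ?n ws'] lws' by simp
  have colW: "\<And>j. j < ?n \<Longrightarrow> col W j = ws' ! j" unfolding W_def
    using col_mat_of_cols lws' ws'c by auto
  have WtW: "transpose_mat W * W = 1\<^sub>m ?n"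
    by (rule eq_matI, insert W, auto simp: colW on)
  have WWt: "W * transpose_mat W = 1\<^sub>m ?n"
    using mat_mult_left_right_inverse[OF _ W WtW] W by auto
  define u where "u = ws' ! 0"
  have u: "u = (1 / sqrt (v \<bullet> v)) \<cdot>\<^sub>v v" unfolding u_def ws'_def using hdws lws
    by (cases ws, auto)
  have Au: "A *\<^sub>v u = e \<cdot>\<^sub>v u" unfolding u using A v Av by (simp add: mult_mat_vec smult_smult_assoc mult.commute)
  define A' where "A' = transpose_mat W * (A * W)"
  have A': "A' \<in> carrier_mat ?n ?n" unfolding A'_def using A W by auto
  have A'e: "A' $$ (i,j) = ws' ! i \<bullet> (A *\<^sub>v ws' ! j)" if "i < ?n" "j < ?n" for i j
  proof -
    have "A' $$ (i,j) = row (transpose_mat W) i \<bullet> col (A * W) j"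
      unfolding A'_def using that A W by simp
    also have "col (A * W) j = A *\<^sub>v col W j" by (rule col_mult2[OF A W that(2)])
    also have "row (transpose_mat W) i = col W i" using W that by simp
    finally show ?thesis using colW that by simp
  qed
  have A'sym: "A' $$ (i,j) = A' $$ (j,i)" if ij: "i < ?n" "j < ?n" for i j
  proof -
    have "ws' ! i \<bullet> (A *\<^sub>v ws' ! j) = (transpose_mat A *\<^sub>v ws' ! i) \<bullet> ws' ! j"
      using transpose_vec_mult_scalar[OF A ws'c ws'c] ij by metis
    also have "\<dots> = ws' ! j \<bullet> (A *\<^sub>v ws' ! i)" unfolding sym
      by (rule comm_scalar_prod[of _ ?n], insert A ws'c ij, auto)
    finally show ?thesis using A'e ij by simp
  qed
  have A'0: "A' $$ (i,0) = (if i = 0 then e else 0)" if i: "i < ?n" for i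
  proof -
    have "A' $$ (i,0) = ws' ! i \<bullet> (e \<cdot>\<^sub>v u)" using A'e[OF i] Au u_def by simp
    also have "\<dots> = e * (ws' ! i \<bullet> u)" using ws'c i u_def by (simp add: scalar_prod_smult_distrib[of _ ?n])
    finally show ?thesis using on[OF i, of 0] u_def by simp
  qed
  define A3 where "A3 = mat m m (\<lambda>(i,j). A' $$ (Suc i, Suc j))"
  have A3: "A3 \<in> carrier_mat m m" unfolding A3_def by simp
  have A3sym: "transpose_mat A3 = A3"
    by (rule eq_matI, insert A'sym, auto simp: A3_def)
  from Suc.IH[OF A3 A3sym] obtain U3 ms3 where U3: "U3 \<in> carrier_mat m m"
    and U3U3: "transpose_mat U3 * U3 = 1\<^sub>m m" and lms3: "length ms3 = m"
    and sms3: "sorted (rev ms3)" and A3eq: "A3 = U3 * diagm ms3 * transpose_mat U3" by blast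
  let ?E = "mat 1 1 (\<lambda>_. e) :: real mat"
  have A'blk: "A' = four_block_mat ?E (0\<^sub>m 1 m) (0\<^sub>m m 1) A3"
  proof (rule eq_matI)
    fix i j assume ij: "i < dim_row (four_block_mat ?E (0\<^sub>m 1 m) (0\<^sub>m m 1) A3)"
      "j < dim_col (four_block_mat ?E (0\<^sub>m 1 m) (0\<^sub>m m 1) A3)"
    hence i: "i < ?n" and j: "j < ?n" using A3 by auto
    show "A' $$ (i, j) = four_block_mat ?E (0\<^sub>m 1 m) (0\<^sub>m m 1) A3 $$ (i, j)"
    proof (cases "i = 0 \<or> j = 0")
      case True
      thus ?thesis using A'0[OF i] A'0[OF j] A'sym[OF i j] i j A3 by auto
    next
      case False
      then obtain i' j' where "i = Suc i'" "j = Suc j'" by (cases i; cases j; auto)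
      thus ?thesis using i j A3 by (auto simp: A3_def)
    qed
  qed (insert A' A3, auto)
  define V where "V = four_block_mat (1\<^sub>m 1) (0\<^sub>m 1 m) (0\<^sub>m m 1) U3"
  have V: "V \<in> carrier_mat ?n ?n" unfolding V_def using U3 by auto
  define ms where "ms = e # ms3"
  have Dblk: "diagm ms = four_block_mat ?E (0\<^sub>m 1 m) (0\<^sub>m m 1) (diagm ms3)"
    by (rule eq_matI, auto simp: diagm_def ms_def lms3 nth_Cons')
  have Vt: "transpose_mat V = four_block_mat (1\<^sub>m 1) (0\<^sub>m 1 m) (0\<^sub>m m 1) (transpose_mat U3)"
    unfolding V_def using U3 by (subst transpose_four_block_mat, auto)
  have D3: "diagm ms3 \<in> carrier_mat m m" using lms3 diagm_carrier by metis
  have E: "?E \<in> carrier_mat 1 1" by simp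
  have I1: "(1\<^sub>m 1 :: real mat) \<in> carrier_mat 1 1" by simp
  have Z1: "(0\<^sub>m 1 m :: real mat) \<in> carrier_mat 1 m" by simp
  have Z2: "(0\<^sub>m m 1 :: real mat) \<in> carrier_mat m 1" by simp
  have U3t: "transpose_mat U3 \<in> carrier_mat m m" using U3 by simp
  have "V * diagm ms = four_block_mat ?E (0\<^sub>m 1 m) (0\<^sub>m m 1) (U3 * diagm ms3)"
    unfolding V_def Dblk mult_four_block_mat[OF I1 Z1 Z2 U3 E Z1 Z2 D3]
    using U3 D3 by simp
  also have "\<dots> * transpose_mat V = four_block_mat ?E (0\<^sub>m 1 m) (0\<^sub>m m 1) (U3 * diagm ms3 * transpose_mat U3)"
    unfolding Vt mult_four_block_mat[OF E Z1 Z2 mult_carrier_mat[OF U3 D3] I1 Z1 Z2 U3t]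
    using U3 D3 by simp
  finally have VDV: "V * diagm ms * transpose_mat V = A'" unfolding A'blk A3eq .
  have VtV: "transpose_mat V * V = 1\<^sub>m ?n"
    unfolding Vt unfolding V_def mult_four_block_mat[OF I1 Z1 Z2 U3t I1 Z1 Z2 U3]
    using U3 U3U3 by simp
  define U where "U = W * V"
  have U: "U \<in> carrier_mat ?n ?n" unfolding U_def using W V by auto
  have UtU: "transpose_mat U * U = 1\<^sub>m ?n"
  proof -
    have "transpose_mat U * U = transpose_mat V * (transpose_mat W * W) * V"
      unfolding U_def using W V by (simp add: transpose_mult assoc_mult_mat[of _ ?n ?n _ ?n _ ?n])
    thus ?thesis using WtW VtV V by simp
  qed
  have D: "diagm ms \<in> carrier_mat ?n ?n" using diagm_carrier[of ms] lms3 unfolding ms_def by simp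
  have Aeq: "A = U * diagm ms * transpose_mat U"
  proof -
    have "U * diagm ms * transpose_mat U = W * (V * diagm ms * transpose_mat V) * transpose_mat W"
      unfolding U_def using W V D by (simp add: transpose_mult assoc_mult_mat[of _ ?n ?n _ ?n _ ?n])
    also have "\<dots> = W * A' * transpose_mat W" unfolding VDV ..
    also have "\<dots> = (W * transpose_mat W) * A * (W * transpose_mat W)"
      unfolding A'_def using W A by (simp add: assoc_mult_mat[of _ ?n ?n _ ?n _ ?n])
    also have "\<dots> = A" unfolding WWt using A by simp
    finally show ?thesis by simp
  qed
  have lms: "length ms = ?n" unfolding ms_def using lms3 by simp
  have "\<forall>x \<in> set ms3. x \<le> e"
  proof
    fix x assume "x \<in> set ms3"
    then obtain k where k: "k < m" "x = ms3 ! k" using lms3 by (auto simp: in_set_conv_nth)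
    have "eigenvalue A (ms ! Suc k)" by (rule eig_decomp[OF U UtU lms Aeq], insert k, auto)
    thus "x \<le> e" using emax k unfolding ms_def by auto
  qed
  hence "sorted (rev ms)" unfolding ms_def using sms3 by (auto simp: sorted_append)
  thus ?case using U UtU lms Aeq by blast
qed


lemma proots_prod_lin: "proots (\<Prod>a\<leftarrow>ms. [:- a, 1:]) = mset (ms :: real list)"
proof (induction ms)
  case Nil thus ?case by simp
next
  case (Cons a ms)
  have nz: "(\<Prod>a\<leftarrow>ms. [:- a, 1:]) \<noteq> (0 :: real poly)"
    by (subst prod_list_zero_iff, auto)
  have "proots (\<Prod>x\<leftarrow>a # ms. [:- x, 1:]) = proots ([:- a, 1:] * (\<Prod>x\<leftarrow>ms. [:- x, 1:]))" by simp
  also have "\<dots> = proots [:- a, 1:] + proots (\<Prod>x\<leftarrow>ms. [:- x, 1:])"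
    by (rule proots_mult, insert nz, auto)
  also have "\<dots> = {#a#} + mset ms" using Cons proots_linear_factor[of "- a"] by simp
  finally show ?case by simp
qed

lemma eigenvalues_desc_decomp:
  fixes A U :: "real mat"
  assumes U: "U \<in> carrier_mat n n" and UU: "transpose_mat U * U = 1\<^sub>m n"
    and l: "length ms = n" and s: "sorted (rev ms)" and A: "A = U * diagm ms * transpose_mat U"
  shows "eigenvalues_desc A = ms"
proof -
  have D: "diagm ms \<in> carrier_mat n n" using l diagm_carrier by metis
  have UUt: "U * transpose_mat U = 1\<^sub>m n" using mat_mult_left_right_inverse[OF _ U UU] U by auto
  have "similar_mat A (diagm ms)" unfolding similar_mat_def
    by (rule exI[of _ U], rule exI[of _ "transpose_mat U"], insert U D UU UUt A,
        auto simp: similar_mat_wit_def Let_def)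
  hence "char_poly A = char_poly (diagm ms)" by (rule char_poly_similar)
  also have "\<dots> = (\<Prod>a\<leftarrow>diag_mat (diagm ms). [:- a, 1:])"
    by (rule char_poly_upper_triangular[OF D], auto simp: upper_triangular_def diagm_def)
  also have "diag_mat (diagm ms) = ms"
    by (rule nth_equalityI, auto simp: diag_mat_def diagm_def)
  finally have "proots (char_poly A) = mset ms" using proots_prod_lin by simp
  hence "eigenvalues_desc A = rev (sort ms)"
    unfolding eigenvalues_desc_def by (simp add: sorted_list_of_multiset_mset)
  also have "sort ms = sort (rev ms)" by (metis mset_rev sorted_list_of_multiset_mset)
  also have "\<dots> = rev ms" using s by (simp add: sorted_sort_id)
  finally show ?thesis by simp
qed

lemma quad_decomp:
  fixes A U :: "real mat"
  assumes U: "U \<in> carrier_mat n n" and UU: "transpose_mat U * U = 1\<^sub>m n"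
    and l: "length ms = n" and A: "A = U * diagm ms * transpose_mat U" and x: "x \<in> carrier_vec n"
  shows "x \<bullet> (A *\<^sub>v x) = (\<Sum>j<n. ms ! j * ((transpose_mat U *\<^sub>v x) $ j)^2)"
    and "x \<bullet> x = (\<Sum>j<n. ((transpose_mat U *\<^sub>v x) $ j)^2)"
proof -
  have D: "diagm ms \<in> carrier_mat n n" using l diagm_carrier by metis
  have UUt: "U * transpose_mat U = 1\<^sub>m n" using mat_mult_left_right_inverse[OF _ U UU] U by auto
  define y where "y = transpose_mat U *\<^sub>v x"
  have y: "y \<in> carrier_vec n" unfolding y_def using U by (intro carrier_vecI) auto
  have "x \<bullet> (A *\<^sub>v x) = x \<bullet> (U *\<^sub>v (diagm ms *\<^sub>v y))"
    unfolding A y_def using U D x by (simp add: assoc_mult_mat_vec[of _ n n _ n])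
  also have "\<dots> = y \<bullet> (diagm ms *\<^sub>v y)"
  proof -
    have "(transpose_mat U *\<^sub>v x) \<bullet> (diagm ms *\<^sub>v y) = x \<bullet> (U *\<^sub>v (diagm ms *\<^sub>v y))"
      by (rule transpose_vec_mult_scalar[OF U _ x], insert D y, auto)
    thus ?thesis unfolding y_def[symmetric] by simp
  qed
  also have "\<dots> = (\<Sum>j<n. ms ! j * (y $ j)^2)"
  proof -
    have rowD: "row (diagm ms) i = ms ! i \<cdot>\<^sub>v unit_vec n i" if "i < n" for i
      by (rule eq_vecI, insert that l, auto simp: diagm_def)
    have "diagm ms *\<^sub>v y = vec n (\<lambda>j. ms ! j * y $ j)"
      by (rule eq_vecI, insert D y, auto simp: rowD smult_scalar_prod_distrib[of _ n])
    thus ?thesis using y by (simp add: scalar_prod_def power2_eq_square atLeast0LessThan mult.commute mult.left_commute)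
  qed
  finally show "x \<bullet> (A *\<^sub>v x) = (\<Sum>j<n. ms ! j * ((transpose_mat U *\<^sub>v x) $ j)^2)" unfolding y_def .
  have "x = U *\<^sub>v y" unfolding y_def using U x UUt by (simp add: assoc_mult_mat_vec[of _ n n _ n, symmetric])
  hence "x \<bullet> x = x \<bullet> (U *\<^sub>v y)" by simp
  also have "\<dots> = y \<bullet> y"
  proof -
    have "(transpose_mat U *\<^sub>v x) \<bullet> y = x \<bullet> (U *\<^sub>v y)"
      by (rule transpose_vec_mult_scalar[OF U _ x], insert y, auto)
    thus ?thesis unfolding y_def[symmetric] by simp
  qed
  also have "\<dots> = (\<Sum>j<n. (y $ j)^2)" using y by (simp add: scalar_prod_def power2_eq_square atLeast0LessThan)
  finally show "x \<bullet> x = (\<Sum>j<n. ((transpose_mat U *\<^sub>v x) $ j)^2)" unfolding y_def .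
qed


lemma unit_vec_nz: "k < n \<Longrightarrow> unit_vec n k \<noteq> (0\<^sub>v n :: 'a :: zero_neq_one vec)"
proof
  assume "k < n" "unit_vec n k = (0\<^sub>v n :: 'a vec)"
  hence "unit_vec n k $ k = (0\<^sub>v n :: 'a vec) $ k" by simp
  thus False using \<open>k < n\<close> by simp
qed

lemma exists_sub_vec:
  fixes G :: "real mat"
  assumes G: "G \<in> carrier_mat n n" and k: "k < n"
  shows "\<exists>z. z \<in> carrier_vec n \<and> z \<noteq> 0\<^sub>v n \<and> (\<forall>j. k < j \<and> j < n \<longrightarrow> z $ j = 0)
     \<and> (\<forall>i < k. (G *\<^sub>v z) $ i = 0)"
proof -
  define H where "H = mat n n (\<lambda>(i,j). if i < k then G $$ (i,j) else if i = k then 0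
     else if i = j then 1 else 0)"
  have H: "H \<in> carrier_mat n n" unfolding H_def by simp
  have Ht: "transpose_mat H \<in> carrier_mat n n" using H by simp
  have "transpose_mat H *\<^sub>v unit_vec n k = 0\<^sub>v n"
    by (rule eq_vecI, insert H k, auto simp: scalar_prod_right_unit H_def)
  hence "det (transpose_mat H) = 0"
    using det_0_iff_vec_prod_zero[OF Ht] k unit_vec_nz[OF k] unit_vec_carrier by blast
  hence "det H = 0" using det_transpose[OF H] by simp
  then obtain z where z: "z \<in> carrier_vec n" "z \<noteq> 0\<^sub>v n" "H *\<^sub>v z = 0\<^sub>v n"
    using det_0_iff_vec_prod_zero[OF H] by blast
  have Hz: "(H *\<^sub>v z) $ i = 0" if "i < n" for i using z(3) that by simp
  have "z $ j = 0" if j: "k < j" "j < n" for j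
  proof -
    have "row H j = unit_vec n j" by (rule eq_vecI, insert j H, auto simp: H_def)
    moreover have "(H *\<^sub>v z) $ j = row H j \<bullet> z" using H j by simp
    ultimately show ?thesis using Hz[of j] j scalar_prod_left_unit[OF z(1) j(2)] by simp
  qed
  moreover have "(G *\<^sub>v z) $ i = 0" if i: "i < k" for i
  proof -
    have "row H i = row G i" by (rule eq_vecI, insert i k H G, auto simp: H_def)
    thus ?thesis using Hz[of i] i k G H by simp
  qed
  ultimately show ?thesis using z by blast
qed

lemma weyl:
  fixes C M U W :: "real mat"
  assumes U: "U \<in> carrier_mat n n" and UU: "transpose_mat U * U = 1\<^sub>m n"
    and lc: "length cs = n" and sc: "sorted (rev cs)" and C: "C = U * diagm cs * transpose_mat U"
    and W: "W \<in> carrier_mat n n" and WW: "transpose_mat W * W = 1\<^sub>m n"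
    and lm: "length ms = n" and sm: "sorted (rev ms)" and M: "M = W * diagm ms * transpose_mat W"
    and le: "\<And>x. x \<in> carrier_vec n \<Longrightarrow> x \<bullet> (C *\<^sub>v x) \<le> x \<bullet> (M *\<^sub>v x)"
    and k: "k < n"
  shows "cs ! k \<le> ms ! k"
proof -
  have G: "transpose_mat W * U \<in> carrier_mat n n" using U W by simp
  obtain z where z: "z \<in> carrier_vec n" "z \<noteq> 0\<^sub>v n" and zk: "\<And>j. k < j \<Longrightarrow> j < n \<Longrightarrow> z $ j = 0"
    and Gz: "\<And>i. i < k \<Longrightarrow> ((transpose_mat W * U) *\<^sub>v z) $ i = 0"
    using exists_sub_vec[OF G k] by blast
  define x where "x = U *\<^sub>v z"
  have x: "x \<in> carrier_vec n" unfolding x_def using U z by simp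
  have Ux: "transpose_mat U *\<^sub>v x = z" unfolding x_def using U z UU
    by (simp add: assoc_mult_mat_vec[of _ n n _ n, symmetric])
  define y where "y = transpose_mat W *\<^sub>v x"
  have yk: "y $ i = 0" if "i < k" for i
    using Gz[OF that] unfolding y_def x_def using U W z by (simp add: assoc_mult_mat_vec[of _ n n _ n])
  have qC: "x \<bullet> (C *\<^sub>v x) = (\<Sum>j<n. cs ! j * (z $ j)^2)"
    using quad_decomp(1)[OF U UU lc C x] Ux by simp
  have nC: "x \<bullet> x = (\<Sum>j<n. (z $ j)^2)"
    using quad_decomp(2)[OF U UU lc C x] Ux by simp
  have qM: "x \<bullet> (M *\<^sub>v x) = (\<Sum>j<n. ms ! j * (y $ j)^2)"
    using quad_decomp(1)[OF W WW lm M x] unfolding y_def by simp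
  have nM: "x \<bullet> x = (\<Sum>j<n. (y $ j)^2)"
    using quad_decomp(2)[OF W WW lm M x] unfolding y_def by simp
  have "cs ! k * (x \<bullet> x) = (\<Sum>j<n. cs ! k * (z $ j)^2)" unfolding nC by (simp add: sum_distrib_left)
  also have "\<dots> \<le> (\<Sum>j<n. cs ! j * (z $ j)^2)"
  proof (rule sum_mono)
    fix j assume j: "j \<in> {..<n}"
    show "cs ! k * (z $ j)^2 \<le> cs ! j * (z $ j)^2"
    proof (cases "j \<le> k")
      case True
      hence "cs ! k \<le> cs ! j" using sorted_rev_nth_mono[OF sc True] k lc by simp
      thus ?thesis by (simp add: mult_right_mono)
    next
      case False thus ?thesis using zk[of j] j by simp
    qed
  qed
  also have "\<dots> \<le> (\<Sum>j<n. ms ! j * (y $ j)^2)" using le[OF x] qC qM by simp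
  also have "\<dots> \<le> (\<Sum>j<n. ms ! k * (y $ j)^2)"
  proof (rule sum_mono)
    fix j assume j: "j \<in> {..<n}"
    show "ms ! j * (y $ j)^2 \<le> ms ! k * (y $ j)^2"
    proof (cases "k \<le> j")
      case True
      hence "ms ! j \<le> ms ! k" using sorted_rev_nth_mono[OF sm True] j lm by simp
      thus ?thesis by (simp add: mult_right_mono)
    next
      case False thus ?thesis using yk[of j] by simp
    qed
  qed
  also have "\<dots> = ms ! k * (x \<bullet> x)" unfolding nM by (simp add: sum_distrib_left)
  finally have ineq: "cs ! k * (x \<bullet> x) \<le> ms ! k * (x \<bullet> x)" .
  have "x \<bullet> x > 0"
  proof -
    from z obtain j where j: "j < n" "z $ j \<noteq> 0" by (auto simp: vec_eq_iff)
    have "(z $ j)^2 \<le> (\<Sum>j<n. (z $ j)^2)"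
      by (rule member_le_sum[where f = "\<lambda>j. (z $ j)^2"], insert j, auto)
    moreover have "(z $ j)^2 > 0" using j by simp
    ultimately show ?thesis unfolding nC by linarith
  qed
  thus ?thesis using ineq by simp
qed

lemma trace_decomp:
  fixes A U :: "real mat"
  assumes U: "U \<in> carrier_mat n n" and UU: "transpose_mat U * U = 1\<^sub>m n"
    and l: "length ms = n" and A: "A = U * diagm ms * transpose_mat U"
  shows "(\<Sum>i<n. A $$ (i,i)) = (\<Sum>j<n. ms ! j)"
proof -
  have Ac: "A \<in> carrier_mat n n" unfolding A using U l diagm_carrier[of ms] by simp
  have "(\<Sum>i<n. A $$ (i,i)) = (\<Sum>i<n. \<Sum>j<n. ms ! j * (U $$ (i,j))^2)"
  proof (rule sum.cong[OF refl])
    fix i assume i: "i \<in> {..<n}"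
    have e: "unit_vec n i \<in> carrier_vec n" by simp
    have "A $$ (i,i) = unit_vec n i \<bullet> (A *\<^sub>v unit_vec n i)" using i Ac
      by (simp add: scalar_prod_right_unit)
    also have "\<dots> = (\<Sum>j<n. ms ! j * ((transpose_mat U *\<^sub>v unit_vec n i) $ j)^2)"
      by (rule quad_decomp(1)[OF U UU l A e])
    also have "\<dots> = (\<Sum>j<n. ms ! j * (U $$ (i,j))^2)"
      using i U by (intro sum.cong, auto simp: scalar_prod_right_unit)
    finally show "A $$ (i,i) = (\<Sum>j<n. ms ! j * (U $$ (i,j))^2)" .
  qed
  also have "\<dots> = (\<Sum>j<n. ms ! j * (\<Sum>i<n. (U $$ (i,j))^2))"
    by (subst sum.swap, simp add: sum_distrib_left)
  also have "\<dots> = (\<Sum>j<n. ms ! j)"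
  proof (rule sum.cong[OF refl])
    fix j assume j: "j \<in> {..<n}"
    have "(transpose_mat U * U) $$ (j,j) = (\<Sum>i<n. (U $$ (i,j))^2)"
      using j U by (simp add: scalar_prod_def power2_eq_square atLeast0LessThan)
    thus "ms ! j * (\<Sum>i<n. (U $$ (i,j))^2) = ms ! j" using UU j by simp
  qed
  finally show ?thesis .
qed


lemma quad_rank1:
  fixes C M :: "real mat"
  assumes C: "C \<in> carrier_mat d d" and M: "M \<in> carrier_mat d d"
    and Me: "\<And>a b. a < d \<Longrightarrow> b < d \<Longrightarrow> M $$ (a,b) = C $$ (a,b) + t * w a * w b"
    and x: "x \<in> carrier_vec d"
  shows "x \<bullet> (M *\<^sub>v x) = x \<bullet> (C *\<^sub>v x) + t * (\<Sum>a<d. w a * x $ a)^2"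
proof -
  have "x \<bullet> (M *\<^sub>v x) = (\<Sum>a<d. x $ a * (\<Sum>b<d. M $$ (a,b) * x $ b))"
    using M x by (simp add: scalar_prod_def atLeast0LessThan)
  also have "\<dots> = (\<Sum>a<d. x $ a * (\<Sum>b<d. C $$ (a,b) * x $ b)) + (\<Sum>a<d. \<Sum>b<d. t * (w a * x $ a) * (w b * x $ b))"
    by (simp add: Me algebra_simps sum.distrib sum_distrib_left)
  also have "(\<Sum>a<d. x $ a * (\<Sum>b<d. C $$ (a,b) * x $ b)) = x \<bullet> (C *\<^sub>v x)"
    using C x by (simp add: scalar_prod_def atLeast0LessThan)
  also have "(\<Sum>a<d. \<Sum>b<d. t * (w a * x $ a) * (w b * x $ b)) = t * (\<Sum>a<d. w a * x $ a)^2"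
  proof -
    have "t * (\<Sum>a<d. w a * x $ a)^2 = t * (\<Sum>a<d. \<Sum>b<d. (w a * x $ a) * (w b * x $ b))"
      by (simp only: power2_eq_square sum_product)
    also have "\<dots> = (\<Sum>a<d. \<Sum>b<d. t * (w a * x $ a) * (w b * x $ b))"
      by (simp only: sum_distrib_left mult.assoc)
    finally show ?thesis by simp
  qed
  finally show ?thesis .
qed

lemma final_ineq:
  fixes p q :: "nat \<Rightarrow> real"
  assumes p: "\<And>k. k < d \<Longrightarrow> 0 \<le> p k" and q: "\<And>k. k < d \<Longrightarrow> 0 \<le> q k"
    and sp: "(\<Sum>k<d. p k) \<le> r" and sq: "(\<Sum>k<d. q k) \<le> r"
  shows "(\<Sum>k<d. (p k - q k)^2) \<le> 2 * r^2"
proof -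
  have sq_le: "(\<Sum>k<d. (f k)^2) \<le> r^2" if f: "\<And>k. k < d \<Longrightarrow> 0 \<le> f k" and s: "(\<Sum>k<d. f k) \<le> r"
    for f :: "nat \<Rightarrow> real"
  proof -
    define P where "P = (\<Sum>k<d. f k)"
    have P0: "0 \<le> P" unfolding P_def using f by (auto intro: sum_nonneg)
    have "(\<Sum>k<d. (f k)^2) \<le> (\<Sum>k<d. f k * P)"
    proof (rule sum_mono)
      fix k assume k: "k \<in> {..<d}"
      have "f k \<le> P" unfolding P_def by (rule member_le_sum, insert k f, auto)
      thus "(f k)^2 \<le> f k * P" using f[of k] k by (simp add: power2_eq_square mult_left_mono)
    qed
    also have "\<dots> = P * P" unfolding P_def by (simp add: sum_distrib_right)
    also have "\<dots> \<le> r * r" using P0 s unfolding P_def[symmetric] by (simp add: mult_mono)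
    finally show ?thesis by (simp add: power2_eq_square)
  qed
  have "(\<Sum>k<d. (p k - q k)^2) \<le> (\<Sum>k<d. (p k)^2 + (q k)^2)"
  proof (rule sum_mono)
    fix k assume "k \<in> {..<d}"
    hence "0 \<le> p k * q k" using p q by simp
    thus "(p k - q k)^2 \<le> (p k)^2 + (q k)^2" by (simp add: power2_diff)
  qed
  also have "\<dots> \<le> r^2 + r^2" using sq_le[OF p sp] sq_le[OF q sq] by (simp add: sum.distrib)
  finally show ?thesis by simp
qed


lemma emp_cov_entry:
  assumes X: "X \<in> carrier_mat d n" and a: "a < d" and b: "b < d"
  shows "emp_cov X $$ (a,b) = (1 / real n) * (\<Sum>j<n. X $$ (a,j) * X $$ (b,j))"
  using X a b by (simp add: emp_cov_def scalar_prod_def atLeast0LessThan)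

lemma emp_cov_carrier: "X \<in> carrier_mat d n \<Longrightarrow> emp_cov X \<in> carrier_mat d d"
  by (simp add: emp_cov_def)

lemma sym_of_entries:
  fixes A :: "real mat"
  assumes "A \<in> carrier_mat d d" "\<And>a b. a < d \<Longrightarrow> b < d \<Longrightarrow> A $$ (a,b) = A $$ (b,a)"
  shows "transpose_mat A = A"
  by (rule eq_matI, insert assms, auto)

lemma one_side:
  fixes X C :: "real mat"
  assumes X: "X \<in> carrier_mat d n" and j0: "j0 < n"
    and Cdef: "C = mat d d (\<lambda>(a,b). (1 / real n) * (\<Sum>j\<in>{..<n} - {j0}. X $$ (a,j) * X $$ (b,j)))"
    and ball: "in_unit_ball_cols X"
    and UC: "UC \<in> carrier_mat d d" "transpose_mat UC * UC = 1\<^sub>m d" "length cs = d" "sorted (rev cs)"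
      "C = UC * diagm cs * transpose_mat UC"
  shows "(\<forall>k<d. cs ! k \<le> eigenvalues_desc (emp_cov X) ! k) \<and>
    (\<Sum>k<d. eigenvalues_desc (emp_cov X) ! k - cs ! k) \<le> 1 / real n"
proof -
  let ?A = "emp_cov X"
  have A: "?A \<in> carrier_mat d d" using emp_cov_carrier[OF X] .
  have C: "C \<in> carrier_mat d d" unfolding Cdef by simp
  have Ae: "?A $$ (a,b) = C $$ (a,b) + (1 / real n) * X $$ (a,j0) * X $$ (b,j0)" if "a < d" "b < d" for a b
  proof -
    have "(\<Sum>j<n. X $$ (a,j) * X $$ (b,j)) = X $$ (a,j0) * X $$ (b,j0) + (\<Sum>j\<in>{..<n} - {j0}. X $$ (a,j) * X $$ (b,j))"
      using j0 by (subst sum.remove[of _ j0], auto)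
    thus ?thesis using emp_cov_entry[OF X that] that unfolding Cdef by (simp add: algebra_simps)
  qed
  have Asym: "transpose_mat ?A = ?A"
    by (rule sym_of_entries[OF A], simp add: emp_cov_entry[OF X] mult.commute)
  from spectral[OF A Asym] obtain U ms where U: "U \<in> carrier_mat d d" "transpose_mat U * U = 1\<^sub>m d"
    "length ms = d" "sorted (rev ms)" "?A = U * diagm ms * transpose_mat U" by blast
  have ev: "eigenvalues_desc ?A = ms" by (rule eigenvalues_desc_decomp[OF U])
  have n0: "real n > 0" using j0 by simp
  have le: "x \<bullet> (C *\<^sub>v x) \<le> x \<bullet> (?A *\<^sub>v x)" if x: "x \<in> carrier_vec d" for x
    using quad_rank1[OF C A Ae x] n0 by simp
  have mono: "\<forall>k<d. cs ! k \<le> ms ! k"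
    using weyl[OF UC U(1-5) le] by blast
  have "(\<Sum>k<d. ms ! k - cs ! k) = (\<Sum>i<d. ?A $$ (i,i)) - (\<Sum>i<d. C $$ (i,i))"
    using trace_decomp[OF U(1-3,5)] trace_decomp[OF UC(1-3,5)] by (simp add: sum_subtractf)
  also have "\<dots> = (\<Sum>i<d. (1 / real n) * (X $$ (i,j0))^2)"
    by (simp add: Ae sum.distrib power2_eq_square mult.assoc)
  also have "\<dots> = (1 / real n) * (\<Sum>i<d. (X $$ (i,j0))^2)" by (simp add: sum_distrib_left)
  also have "\<dots> \<le> (1 / real n) * 1"
  proof -
    have "(\<Sum>i<d. (X $$ (i,j0))^2) \<le> 1" using ball j0 X unfolding in_unit_ball_cols_def by auto
    thus ?thesis using n0 by (intro mult_left_mono, auto)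
  qed
  finally show ?thesis using mono ev by simp
qed

theorem mainTheorem1:
  fixes X X' :: "real mat" and d n :: nat
  assumes "d \<ge> 1" and "n \<ge> 1"
    and "X \<in> carrier_mat d n" and "X' \<in> carrier_mat d n"
    and "neighbors X X'"
    and "in_unit_ball_cols X" and "in_unit_ball_cols X'"
  shows "sqrt (\<Sum>i < d. (eigenvalues_desc (emp_cov X) ! i - eigenvalues_desc (emp_cov X') ! i)\<^sup>2)
           \<le> sqrt 2 / real n"
proof -
  note X = assms(3) and X' = assms(4)
  have "card {j. j < n \<and> col X j \<noteq> col X' j} = 1" using assms(5) X unfolding neighbors_def by auto
  then obtain j0 where S: "{j. j < n \<and> col X j \<noteq> col X' j} = {j0}" by (rule card_1_singletonE)
  hence j0: "j0 < n" by auto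
  have same: "X $$ (a,j) = X' $$ (a,j)" if "a < d" "j < n" "j \<noteq> j0" for a j
  proof -
    have "col X j = col X' j" using S that by auto
    hence "col X j $ a = col X' j $ a" by simp
    thus ?thesis using that X X' by simp
  qed
  define C where "C = mat d d (\<lambda>(a,b). (1 / real n) * (\<Sum>j\<in>{..<n} - {j0}. X $$ (a,j) * X $$ (b,j)))"
  have C'def: "C = mat d d (\<lambda>(a,b). (1 / real n) * (\<Sum>j\<in>{..<n} - {j0}. X' $$ (a,j) * X' $$ (b,j)))"
    unfolding C_def by (rule eq_matI, auto simp: same intro!: sum.cong)
  have C: "C \<in> carrier_mat d d" unfolding C_def by simp
  have Csym: "transpose_mat C = C"
    by (rule sym_of_entries[OF C], simp add: C_def mult.commute)
  from spectral[OF C Csym] obtain UC cs where UC: "UC \<in> carrier_mat d d" "transpose_mat UC * UC = 1\<^sub>m d"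
    "length cs = d" "sorted (rev cs)" "C = UC * diagm cs * transpose_mat UC" by blast
  define mu where "mu = eigenvalues_desc (emp_cov X)"
  define nu where "nu = eigenvalues_desc (emp_cov X')"
  from one_side[OF X j0 C_def assms(6) UC, folded mu_def]
  have m1: "\<forall>k<d. cs ! k \<le> mu ! k" and m2: "(\<Sum>k<d. mu ! k - cs ! k) \<le> 1 / real n" by auto
  from one_side[OF X' j0 C'def assms(7) UC, folded nu_def]
  have n1: "\<forall>k<d. cs ! k \<le> nu ! k" and n2: "(\<Sum>k<d. nu ! k - cs ! k) \<le> 1 / real n" by auto
  have "(\<Sum>k<d. ((mu ! k - cs ! k) - (nu ! k - cs ! k))^2) \<le> 2 * (1 / real n)^2"
    by (rule final_ineq, insert m1 m2 n1 n2, auto)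
  hence S2: "(\<Sum>k<d. (mu ! k - nu ! k)^2) \<le> 2 / (real n)^2"
    by (simp add: power_divide)
  have "sqrt (\<Sum>k<d. (mu ! k - nu ! k)^2) \<le> sqrt (2 / (real n)^2)"
    using S2 by (rule real_sqrt_le_mono)
  also have "\<dots> = sqrt 2 / real n" by (simp add: real_sqrt_divide)
  finally show ?thesis unfolding mu_def nu_def .
qed

end
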